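(* Let $n,k$ be integers with $k\leqslant n<2k-3$. Then there exists $M$ such that for every integer $m\geqslant M$ we have $\alpha(m,n,k)=h(m,n,k)$, and every $(m,n,k)$-intersecting family of maximum cardinality equals $\mathcal{H}_t^{m,n,k}$ for some $t\in[n]$.
   Context: For positive integers $a\leqslant b$, $[a,b]=\{a,a+1,\dots,b\}$ and $[a]=[1,a]$; $\binom{X}{k}$ denotes the family of all $k$-subsets of a set $X$. A family of sets is intersecting if no two of its members are disjoint. For integers $0<k\leqslant n<2k<m$, an $(m,n,k)$-intersecting family is an intersecting family $\mathcal{F}$ with $\binom{[n]}{k}\subseteq\mathcal{F}\subseteq\binom{[m]}{k}$, and $\alpha(m,n,k)$ is the maximum cardinality of an $(m,n,k)$-intersecting family. Define $h(m,n,k)=\binom{n}{k}+\sum_{i=1}^{2k-n-1}\binom{n-1}{k-i-1}\binom{m-n}{i}$. For $t\in[n]$, define \[ \mathcal{H}_t^{m,n,k}=\binom{[n]}{k}\cup\bigcup_{i=1}^{2k-n-1}\left\{A\cup B\cup\{t\}\ \middle|\ A\in\binom{[n]\setminus\{t\}}{k-i-1},\ B\in\binom{[n+1,m]}{i}\right\}, \] an $(m,n,k)$-intersecting family of cardinality $h(m,n,k)$. *)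

theory Defs
  imports Main
begin

definition intersecting :: "nat set set \<Rightarrow> bool" where
  "intersecting F \<longleftrightarrow> (\<forall>A\<in>F. \<forall>B\<in>F. A \<inter> B \<noteq> {})"

definition ksubsets :: "nat set \<Rightarrow> nat \<Rightarrow> nat set set" where
  "ksubsets X k = {A. A \<subseteq> X \<and> card A = k}"

definition mnk_intersecting :: "nat \<Rightarrow> nat \<Rightarrow> nat \<Rightarrow> nat set set \<Rightarrow> bool" where
  "mnk_intersecting m n k F \<longleftrightarrow>
     intersecting F \<and> ksubsets {1..n} k \<subseteq> F \<and> F \<subseteq> ksubsets {1..m} k"

definition alpha :: "nat \<Rightarrow> nat \<Rightarrow> nat \<Rightarrow> nat" where
  "alpha m n k = Max (card ` {F. mnk_intersecting m n k F})"

definition h :: "nat \<Rightarrow> nat \<Rightarrow> nat \<Rightarrow> nat" where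
  "h m n k = (n choose k) +
     (\<Sum>i=1..2*k-n-1. ((n-1) choose (k-i-1)) * ((m-n) choose i))"

definition H :: "nat \<Rightarrow> nat \<Rightarrow> nat \<Rightarrow> nat \<Rightarrow> nat set set" where
  "H m n k t = ksubsets {1..n} k \<union>
     (\<Union>i\<in>{1..2*k-n-1}. {A \<union> B \<union> {t} | A B.
        A \<in> ksubsets ({1..n} - {t}) (k-i-1) \<and> B \<in> ksubsets {n+1..m} i})"

end

theory Submission
  imports Defs "HOL-Combinatorics.Multiset_Permutations"
begin

definition off :: "nat \<Rightarrow> nat \<Rightarrow> nat \<Rightarrow> nat" where
  "off n a b = (if a \<le> b then b - a else n + b - a)"

lemma off_lt: "a < n \<Longrightarrow> b < n \<Longrightarrow> off n a b < n"
  by (auto simp: off_def)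

lemma off_inj2: "a < n \<Longrightarrow> b < n \<Longrightarrow> c < n \<Longrightarrow> off n a b = off n a c \<Longrightarrow> b = c"
  by (auto simp: off_def split: if_splits)

lemma off_inj1: "a < n \<Longrightarrow> b < n \<Longrightarrow> c < n \<Longrightarrow> off n a c = off n b c \<Longrightarrow> a = b"
  by (auto simp: off_def split: if_splits)

lemma off_swap: "a < n \<Longrightarrow> b < n \<Longrightarrow> a \<noteq> b \<Longrightarrow> off n b a = n - off n a b"
  by (auto simp: off_def)

definition pw :: "nat \<Rightarrow> nat \<Rightarrow> nat set \<Rightarrow> bool" where
  "pw n r J \<longleftrightarrow> (\<forall>a\<in>J. \<forall>b\<in>J. off n a b < r \<or> off n b a < r)"

definition gmap :: "nat \<Rightarrow> nat \<Rightarrow> nat \<Rightarrow> nat \<Rightarrow> nat" where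
  "gmap n r j i = (if off n j i < r then off n j i else off n j i + r - n)"

lemma gmap_range:
  assumes "J \<subseteq> {..<n}" "pw n r J" "j \<in> J" "i \<in> J" "2*r \<le> n"
  shows "gmap n r j i < r"
proof -
  have "j < n" "i < n" using assms by auto
  have "off n j i < r \<or> off n i j < r" using assms unfolding pw_def by blast
  then show ?thesis using \<open>j<n\<close> \<open>i<n\<close> assms(5) by (auto simp: gmap_def off_def)
qed

lemma gmap_inj:
  assumes "J \<subseteq> {..<n}" "pw n r J" "j \<in> J" "2*r \<le> n"
  shows "inj_on (gmap n r j) J"
proof
  fix a b assume ab: "a \<in> J" "b \<in> J" "gmap n r j a = gmap n r j b"
  have lt: "a < n" "b < n" "j < n" using assms ab by auto
  have "off n a b < r \<or> off n b a < r" "off n j a < r \<or> off n a j < r" "off n j b < r \<or> off n b j < r"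
    using assms ab unfolding pw_def by blast+
  then show "a = b" using ab(3) lt assms(4) by (auto simp: gmap_def off_def split: if_splits)
qed

lemma cycle_le:
  assumes "J \<subseteq> {..<n}" "pw n r J" "2*r \<le> n"
  shows "card J \<le> r"
proof (cases "J = {}")
  case True then show ?thesis by simp
next
  case False
  then obtain j where j: "j \<in> J" by blast
  have "gmap n r j ` J \<subseteq> {..<r}" using gmap_range[OF assms(1,2) j _ assms(3)] by auto
  then have "card (gmap n r j ` J) \<le> r" by (metis card_lessThan card_mono finite_lessThan)
  moreover have "card (gmap n r j ` J) = card J"
    using card_image gmap_inj[OF assms(1,2) j assms(3)] by blast
  ultimately show ?thesis by simp
qed

lemma exists_gap:
  assumes "J \<subseteq> {..<n}" "J \<noteq> {}" "J \<noteq> {..<n}"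
  obtains j where "j \<in> J" "\<not>(\<exists>i\<in>J. off n j i = 1)"
proof (cases "\<exists>i\<in>J. i+1<n \<and> i+1 \<notin> J")
  case True
  then obtain i where i: "i \<in> J" "i+1 < n" "i+1 \<notin> J" by blast
  have "\<not>(\<exists>x\<in>J. off n i x = 1)"
  proof
    assume "\<exists>x\<in>J. off n i x = 1"
    then obtain x where "x \<in> J" "off n i x = 1" by blast
    moreover have "x < n" using \<open>x\<in>J\<close> assms(1) by auto
    ultimately have "x = i+1" using i by (auto simp: off_def split: if_splits)
    then show False using \<open>x\<in>J\<close> i by simp
  qed
  then show ?thesis using that i by blast
next
  case False
  obtain i0 where i0: "i0 \<in> J" using assms by blast
  have up: "i0 + d < n \<longrightarrow> i0 + d \<in> J" for d
  proof (induction d)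
    case 0 then show ?case using i0 by simp
  next
    case (Suc d)
    then show ?case using False by (metis add_Suc_right add_lessD1 Suc_eq_plus1 less_SucI)
  qed
  have i0n: "i0 < n" using i0 assms by auto
  have n1: "n - 1 \<in> J" using up[of "n - 1 - i0"] i0n by simp
  have "0 \<notin> J"
  proof
    assume "0 \<in> J"
    have "d < n \<longrightarrow> d \<in> J" for d
    proof (induction d)
      case 0 then show ?case using \<open>0\<in>J\<close> by simp
    next
      case (Suc d) then show ?case using False by (metis Suc_eq_plus1 Suc_lessD)
    qed
    then have "{..<n} \<subseteq> J" by auto
    then show False using assms by auto
  qed
  have "\<not>(\<exists>x\<in>J. off n (n-1) x = 1)"
  proof
    assume "\<exists>x\<in>J. off n (n-1) x = 1"
    then obtain x where "x \<in> J" "off n (n-1) x = 1" by blast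
    moreover have "x < n" using \<open>x\<in>J\<close> assms(1) by auto
    ultimately have "x = 0" by (auto simp: off_def split: if_splits)
    then show False using \<open>x\<in>J\<close> \<open>0\<notin>J\<close> by simp
  qed
  then show ?thesis using that n1 by blast
qed

lemma cycle_eq:
  assumes J: "J \<subseteq> {..<n}" and pw: "pw n r J" and nr: "2*r+1 \<le> n" and r1: "1 \<le> r"
    and cJ: "card J = r"
  shows "\<exists>p<n. J = {i. i < n \<and> off n i p < r}"
proof -
  have fin: "finite J" using J finite_subset by blast
  have "J \<noteq> {}" using cJ r1 by auto
  moreover have "J \<noteq> {..<n}" using cJ nr by auto
  ultimately obtain j where j: "j \<in> J" "\<not>(\<exists>i\<in>J. off n j i = 1)"
    using exists_gap[OF J] by blast
  have jn: "j < n" using j J by auto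
  have gJ: "gmap n r j ` J = {..<r}"
  proof (rule card_subset_eq)
    show "gmap n r j ` J \<subseteq> {..<r}" using gmap_range[OF J pw j(1) _] nr by auto
    show "card (gmap n r j ` J) = card {..<r}"
      using card_image gmap_inj[OF J pw j(1)] nr cJ by auto
  qed simp
  have one: "(\<exists>i\<in>J. off n j i = l) \<or> (\<exists>i\<in>J. off n i j = r - l)" if "1 \<le> l" "l < r" for l
  proof -
    have "l \<in> gmap n r j ` J" using gJ that by auto
    then obtain i where i: "i \<in> J" "gmap n r j i = l" by blast
    have "i < n" using i J by auto
    have "off n j i < r \<or> off n i j < r" using pw i j unfolding pw_def by blast
    show ?thesis
    proof (cases "off n j i < r")
      case True
      then have "off n j i = l" using i(2) by (simp add: gmap_def)
      then show ?thesis using i(1) by blast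
    next
      case False
      with \<open>off n j i < r \<or> off n i j < r\<close> have "off n i j < r" by simp
      moreover have "off n j i + r - n = l" using False i(2) by (simp add: gmap_def)
      ultimately have "off n i j = r - l" using i \<open>i<n\<close> jn that nr False
        by (auto simp: off_def split: if_splits)
      then show ?thesis using i(1) by blast
    qed
  qed
  have ind: "1 \<le> l \<longrightarrow> l < r \<longrightarrow> (\<exists>i\<in>J. off n i j = r - l) \<and> \<not>(\<exists>i\<in>J. off n j i = l)" for l
  proof (induction l)
    case 0 then show ?case by simp
  next
    case (Suc l)
    show ?case
    proof (intro impI)
      assume a: "1 \<le> Suc l" "Suc l < r"
      have notA: "\<not>(\<exists>i\<in>J. off n j i = Suc l)"
      proof (cases "l = 0")
        case True then show ?thesis using j by simp
      next
        case False
        then obtain i1 where i1: "i1 \<in> J" "off n i1 j = r - l" using Suc a by auto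
        show ?thesis
        proof
          assume "\<exists>i\<in>J. off n j i = Suc l"
          then obtain i2 where i2: "i2 \<in> J" "off n j i2 = Suc l" by blast
          have "i1 < n" "i2 < n" using i1 i2 J by auto
          moreover have "off n i1 i2 < r \<or> off n i2 i1 < r" using pw i1 i2 unfolding pw_def by blast
          ultimately show False using i1 i2 jn nr a False
            by (auto simp: off_def split: if_splits)
        qed
      qed
      then show "(\<exists>i\<in>J. off n i j = r - Suc l) \<and> \<not>(\<exists>i\<in>J. off n j i = Suc l)"
        using one[of "Suc l"] a by blast
    qed
  qed
  have "J = {i. i < n \<and> off n i j < r}"
  proof
    show "J \<subseteq> {i. i < n \<and> off n i j < r}"
    proof
      fix i assume i: "i \<in> J"
      have "i < n" using i J by auto
      show "i \<in> {i. i < n \<and> off n i j < r}"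
      proof (cases "i = j")
        case True then show ?thesis using jn r1 by (simp add: off_def)
      next
        case False
        have "off n j i < r \<or> off n i j < r" using pw i j unfolding pw_def by blast
        moreover have "off n j i \<noteq> 0" using False \<open>i<n\<close> jn by (auto simp: off_def)
        ultimately show ?thesis using ind[of "off n j i"] i \<open>i<n\<close> by auto
      qed
    qed
    show "{i. i < n \<and> off n i j < r} \<subseteq> J"
    proof
      fix i assume "i \<in> {i. i < n \<and> off n i j < r}"
      then have i: "i < n" "off n i j < r" by auto
      show "i \<in> J"
      proof (cases "off n i j = 0")
        case True then have "i = j" using i jn by (auto simp: off_def split: if_splits)
        then show ?thesis using j by simp
      next
        case False
        then obtain i' where "i' \<in> J" "off n i' j = r - (r - off n i j)"
          using ind[of "r - off n i j"] i by auto
        then have "i' \<in> J" "off n i' j = off n i j" using i by auto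
        then have "i' = i" using off_inj1[of i' n i j] i jn J by auto
        then show ?thesis using \<open>i'\<in>J\<close> by simp
      qed
    qed
  qed
  then show ?thesis using jn by blast
qed

definition arc :: "nat \<Rightarrow> 'a list \<Rightarrow> nat \<Rightarrow> 'a set" where
  "arc r xs i = set (take r (rotate i xs))"

lemma mod_small2: assumes "a < 2*n" shows "(a::nat) mod n = (if a < n then a else a - n)"
proof (cases "a < n")
  case True then show ?thesis by simp
next
  case False
  then have "a mod n = (a - n) mod n" by (simp add: le_mod_geq)
  moreover have "a - n < n" using \<open>a < 2*n\<close> False by linarith
  ultimately show ?thesis using False by simp
qed

lemma arc_char:
  assumes "length xs = n" "i < n" "r \<le> n"
  shows "arc r xs i = (\<lambda>q. xs ! q) ` {q. q < n \<and> off n i q < r}"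
proof -
  have "set (take r (rotate i xs)) = (\<lambda>l. rotate i xs ! l) ` {..<r}"
  proof -
    have "set (take r (rotate i xs)) = {take r (rotate i xs) ! l | l. l < length (take r (rotate i xs))}"
      by (simp add: set_conv_nth)
    also have "\<dots> = (\<lambda>l. rotate i xs ! l) ` {..<r}" using assms by (force simp: min_def)
    finally show ?thesis .
  qed
  also have "\<dots> = (\<lambda>l. xs ! ((i + l) mod n)) ` {..<r}"
    using assms by (auto simp: nth_rotate)
  also have "\<dots> = (\<lambda>q. xs ! q) ` ((\<lambda>l. (i + l) mod n) ` {..<r})" by (simp add: image_image)
  also have "(\<lambda>l. (i + l) mod n) ` {..<r} = {q. q < n \<and> off n i q < r}"
  proof
    show "(\<lambda>l. (i + l) mod n) ` {..<r} \<subseteq> {q. q < n \<and> off n i q < r}"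
    proof
      fix q assume "q \<in> (\<lambda>l. (i + l) mod n) ` {..<r}"
      then obtain l where l: "l < r" "q = (i + l) mod n" by blast
      have "i + l < 2*n" using l assms by linarith
      then show "q \<in> {q. q < n \<and> off n i q < r}" using l assms mod_small2[of "i+l" n]
        by (auto simp: off_def split: if_splits)
    qed
    show "{q. q < n \<and> off n i q < r} \<subseteq> (\<lambda>l. (i + l) mod n) ` {..<r}"
    proof
      fix q assume q: "q \<in> {q. q < n \<and> off n i q < r}"
      have "i + off n i q < 2*n" using q assms by (auto simp: off_def)
      then have "(i + off n i q) mod n = q" using q assms mod_small2[of "i + off n i q" n]
        by (auto simp: off_def split: if_splits)
      then show "q \<in> (\<lambda>l. (i + l) mod n) ` {..<r}" using q by (metis (mono_tags) image_eqI lessThan_iff mem_Collect_eq)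
    qed
  qed
  finally show ?thesis by (simp add: arc_def)
qed

lemma arc_mem:
  assumes "length xs = n" "distinct xs" "i < n" "r \<le> n" "p < n"
  shows "xs ! p \<in> arc r xs i \<longleftrightarrow> off n i p < r"
  using assms by (auto simp: arc_char nth_eq_iff_index_eq)

lemma arc_inter:
  assumes "length xs = n" "distinct xs" "i < n" "j < n" "r \<le> n" "arc r xs i \<inter> arc r xs j \<noteq> {}"
  shows "off n i j < r \<or> off n j i < r"
proof -
  obtain q where q: "q < n" "off n i q < r" "off n j q < r"
    using assms by (auto simp: arc_char nth_eq_iff_index_eq)
  then show ?thesis using assms by (auto simp: off_def split: if_splits)
qed

lemma card_arc:
  assumes "distinct xs" "r \<le> length xs"
  shows "card (arc r xs i) = r"
  using assms by (simp add: arc_def distinct_card)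

lemma inj_rotate: "inj (rotate i)"
proof (induction i)
  case 0 then show ?case by simp
next
  case (Suc i)
  have "rotate (Suc i) = rotate1 \<circ> rotate i" by auto
  then show ?case using Suc inj_rotate1 by (metis inj_compose)
qed

lemma rotate_bij: "finite X \<Longrightarrow> bij_betw (rotate i) (permutations_of_set X) (permutations_of_set X)"
proof -
  assume fin: "finite X"
  let ?P = "permutations_of_set X"
  have inj: "inj_on (rotate i) ?P" using inj_rotate by (metis inj_on_subset subset_UNIV)
  have sub: "rotate i ` ?P \<subseteq> ?P" by (auto simp: permutations_of_set_def)
  have "rotate i ` ?P = ?P"
    by (rule card_subset_eq) (use sub inj card_image in auto)
  then show ?thesis using inj by (simp add: bij_betw_def)
qed

lemma count_prefix:
  assumes fin: "finite X" and S: "S \<subseteq> X" "card S = r"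
  shows "card {ys \<in> permutations_of_set X. set (take r ys) = S} = fact r * fact (card X - r)"
proof -
  have finS: "finite S" using fin S finite_subset by blast
  let ?f = "\<lambda>(a,b). (a::'a list) @ b"
  have eq: "{ys \<in> permutations_of_set X. set (take r ys) = S}
      = ?f ` (permutations_of_set S \<times> permutations_of_set (X - S))"
  proof
    show "{ys \<in> permutations_of_set X. set (take r ys) = S}
      \<subseteq> ?f ` (permutations_of_set S \<times> permutations_of_set (X - S))"
    proof
      fix ys assume "ys \<in> {ys \<in> permutations_of_set X. set (take r ys) = S}"
      then have ys: "set ys = X" "distinct ys" "set (take r ys) = S"
        by (auto simp: permutations_of_set_def)
      have d: "distinct (take r ys @ drop r ys)" using ys by simp
      then have "set (drop r ys) = X - S"
        using ys by (metis Diff_cancel Un_Diff distinct_append set_append append_take_drop_id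
             Int_Diff Diff_triv Un_Diff_Int inf_commute)
      moreover have "ys = ?f (take r ys, drop r ys)" by simp
      ultimately show "ys \<in> ?f ` (permutations_of_set S \<times> permutations_of_set (X - S))"
        using ys d by (intro image_eqI[of ys _ "(take r ys, drop r ys)"]) (auto simp: permutations_of_set_def)
    qed
    show "?f ` (permutations_of_set S \<times> permutations_of_set (X - S))
       \<subseteq> {ys \<in> permutations_of_set X. set (take r ys) = S}"
    proof
      fix ys assume "ys \<in> ?f ` (permutations_of_set S \<times> permutations_of_set (X - S))"
      then obtain a b where ab: "ys = a @ b" "set a = S" "distinct a" "set b = X - S" "distinct b"
        by (auto simp: permutations_of_set_def)
      have "length a = r" using ab S distinct_card by metis
      then show "ys \<in> {ys \<in> permutations_of_set X. set (take r ys) = S}"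
        using ab S by (auto simp: permutations_of_set_def)
    qed
  qed
  have inj: "inj_on ?f (permutations_of_set S \<times> permutations_of_set (X - S))"
  proof (rule inj_onI)
    fix x y assume xy: "x \<in> permutations_of_set S \<times> permutations_of_set (X - S)"
      "y \<in> permutations_of_set S \<times> permutations_of_set (X - S)" "?f x = ?f y"
    obtain a b a' b' where e: "x = (a,b)" "y = (a',b')" by fastforce
    have "length a = length a'" using xy e length_finite_permutations_of_set by (metis mem_Sigma_iff)
    then show "x = y" using xy e by auto
  qed
  have "card (X - S) = card X - r" using S fin by (simp add: card_Diff_subset finS)
  then show ?thesis unfolding eq using card_image[OF inj] fin finS S
    by (simp add: card_cartesian_product)
qed

lemma card_filter_sum: "finite A \<Longrightarrow> card {i\<in>A. Q i} = (\<Sum>i\<in>A. if Q i then 1 else (0::nat))"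
  by (simp add: sum.If_cases Int_def)

lemma katona_sum:
  assumes fin: "finite X" and n: "n = card X" and rn: "r \<le> n"
    and T: "T \<subseteq> {S. S \<subseteq> X \<and> card S = r}"
  shows "(\<Sum>xs\<in>permutations_of_set X. card {i\<in>{..<n}. arc r xs i \<in> T})
         = n * (card T * (fact r * fact (n - r)))"
proof -
  let ?P = "permutations_of_set X"
  have finT: "finite T" using T fin by (metis (no_types, lifting) finite_Pow_iff finite_subset mem_Collect_eq Pow_iff subsetI rev_finite_subset)
  have "(\<Sum>xs\<in>?P. card {i\<in>{..<n}. arc r xs i \<in> T})
      = (\<Sum>xs\<in>?P. \<Sum>i\<in>{..<n}. if arc r xs i \<in> T then 1 else (0::nat))"
    by (rule sum.cong[OF refl], rule card_filter_sum) simp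
  also have "\<dots> = (\<Sum>i\<in>{..<n}. \<Sum>xs\<in>?P. if arc r xs i \<in> T then 1 else (0::nat))"
    by (rule sum.swap)
  also have "\<dots> = (\<Sum>i\<in>{..<n}. \<Sum>ys\<in>?P. if set (take r ys) \<in> T then 1 else (0::nat))"
  proof (rule sum.cong[OF refl])
    fix i
    show "(\<Sum>xs\<in>?P. if arc r xs i \<in> T then 1 else (0::nat))
        = (\<Sum>ys\<in>?P. if set (take r ys) \<in> T then 1 else (0::nat))"
      unfolding arc_def
      by (rule sum.reindex_bij_betw[OF rotate_bij[OF fin], of "\<lambda>ys. if set (take r ys) \<in> T then 1 else (0::nat)"])
  qed
  also have "\<dots> = n * card {ys\<in>?P. set (take r ys) \<in> T}"
    using card_filter_sum[of ?P "\<lambda>ys. set (take r ys) \<in> T"] by simp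
  also have "{ys\<in>?P. set (take r ys) \<in> T} = (\<Union>S\<in>T. {ys\<in>?P. set (take r ys) = S})" by auto
  also have "card \<dots> = (\<Sum>S\<in>T. card {ys\<in>?P. set (take r ys) = S})"
    by (rule card_UN_disjoint) (use finT in auto)
  also have "\<dots> = (\<Sum>S\<in>T. fact r * fact (n - r))"
    by (rule sum.cong[OF refl]) (use T count_prefix[OF fin] n in auto)
  also have "\<dots> = card T * (fact r * fact (n - r))" by simp
  finally show ?thesis .
qed

lemma sum_eq_bound:
  assumes "finite P" "\<forall>x\<in>P. f x \<le> (c::nat)" "sum f P = c * card P" "x \<in> P"
  shows "f x = c"
proof -
  have "sum (\<lambda>x. c - f x) P = sum (\<lambda>x. c) P - sum f P"
    using assms by (intro sum_subtractf_nat) auto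
  also have "\<dots> = 0" using assms by simp
  finally have "\<forall>x\<in>P. c - f x = 0" using assms by simp
  then show ?thesis using assms by force
qed

theorem katona:
  assumes fin: "finite X" and n: "n = card X" and r1: "1 \<le> r" and rn: "2*r \<le> n"
    and T: "T \<subseteq> ksubsets X r" and I: "intersecting T"
  shows "card T \<le> (n - 1) choose (r - 1)"
    and "card T = (n - 1) choose (r - 1) \<Longrightarrow> 2*r+1 \<le> n \<Longrightarrow>
         xs \<in> permutations_of_set X \<Longrightarrow> \<exists>p<n. \<forall>i<n. arc r xs i \<in> T \<longleftrightarrow> off n i p < r"
proof -
  let ?P = "permutations_of_set X"
  let ?c = "\<lambda>xs. card {i\<in>{..<n}. arc r xs i \<in> T}"
  have T': "T \<subseteq> {S. S \<subseteq> X \<and> card S = r}" using T by (auto simp: ksubsets_def)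
  have cle: "?c xs \<le> r" if "xs \<in> ?P" for xs
  proof -
    have xs: "length xs = n" "distinct xs" using that n length_finite_permutations_of_set
      by (auto simp: permutations_of_set_def)
    show ?thesis
    proof (rule cycle_le)
      show "{i\<in>{..<n}. arc r xs i \<in> T} \<subseteq> {..<n}" by auto
      show "2*r \<le> n" by fact
      show "pw n r {i\<in>{..<n}. arc r xs i \<in> T}" unfolding pw_def
      proof (intro ballI)
        fix a b assume "a \<in> {i\<in>{..<n}. arc r xs i \<in> T}" "b \<in> {i\<in>{..<n}. arc r xs i \<in> T}"
        then have ab: "a < n" "arc r xs a \<in> T" "b < n" "arc r xs b \<in> T" by auto
        then have "arc r xs a \<inter> arc r xs b \<noteq> {}" using I unfolding intersecting_def by blast
        then show "off n a b < r \<or> off n b a < r" using arc_inter[OF xs ab(1,3)] rn by auto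
      qed
    qed
  qed
  define K where "K = n * (fact r * fact (n - r))"
  have sumeq: "(\<Sum>xs\<in>?P. ?c xs) = card T * K"
    using katona_sum[OF fin n _ T'] rn unfolding K_def by (simp only: mult.left_commute)
  have sumle: "(\<Sum>xs\<in>?P. ?c xs) \<le> r * fact n"
    using sum_bounded_above[of ?P ?c r] cle fin n by (auto simp: mult.commute)
  have E: "((n - 1) choose (r - 1)) * K = r * fact n"
  proof -
    have b: "fact (r-1) * fact (n - r) * ((n - 1) choose (r - 1)) = fact (n-1)"
      using binomial_fact_lemma[of "r-1" "n-1"] r1 rn by simp
    have fr: "fact r = r * fact (r - 1)" using fact_reduce[of r, where 'a=nat] r1 by simp
    have fn: "fact n = n * fact (n - 1)" using fact_reduce[of n, where 'a=nat] r1 rn by simp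
    have "((n - 1) choose (r - 1)) * K = (n * r) * (fact (r-1) * fact (n - r) * ((n - 1) choose (r - 1)))"
      unfolding K_def fr by (simp only: ac_simps)
    also have "\<dots> = (n * r) * fact (n - 1)" by (simp only: b)
    also have "\<dots> = r * fact n" by (simp only: fn ac_simps)
    finally show ?thesis .
  qed
  have K: "K > 0" using r1 rn unfolding K_def by simp
  have main: "card T * K \<le> ((n - 1) choose (r - 1)) * K"
    using sumeq sumle E by linarith
  show "card T \<le> (n - 1) choose (r - 1)" using main K by simp
  assume eq: "card T = (n - 1) choose (r - 1)" and nr: "2*r+1 \<le> n" and xs: "xs \<in> ?P"
  have cP: "card ?P = fact n" using fin n by simp
  have "(\<Sum>xs\<in>?P. ?c xs) = r * card ?P" using sumeq E eq cP by simp
  then have cr: "?c xs = r" using sum_eq_bound[of ?P ?c r xs] cle xs by auto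
  have xs': "length xs = n" "distinct xs" using xs n length_finite_permutations_of_set
    by (auto simp: permutations_of_set_def)
  have pwJ: "pw n r {i\<in>{..<n}. arc r xs i \<in> T}" unfolding pw_def
  proof (intro ballI)
    fix a b assume "a \<in> {i\<in>{..<n}. arc r xs i \<in> T}" "b \<in> {i\<in>{..<n}. arc r xs i \<in> T}"
    then have ab: "a < n" "arc r xs a \<in> T" "b < n" "arc r xs b \<in> T" by auto
    then have "arc r xs a \<inter> arc r xs b \<noteq> {}" using I unfolding intersecting_def by blast
    then show "off n a b < r \<or> off n b a < r" using arc_inter[OF xs' ab(1,3)] rn by auto
  qed
  obtain p where p: "p < n" "{i\<in>{..<n}. arc r xs i \<in> T} = {i. i < n \<and> off n i p < r}"
    using cycle_eq[OF _ pwJ nr r1 cr] by auto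
  show "\<exists>p<n. \<forall>i<n. arc r xs i \<in> T \<longleftrightarrow> off n i p < r"
  proof (intro exI conjI allI impI)
    fix i assume "i < n"
    then show "arc r xs i \<in> T \<longleftrightarrow> off n i p < r" using p(2) by blast
  qed (rule p(1))
qed

lemma arc_nowrap:
  assumes "i + r \<le> length xs" "1 \<le> r"
  shows "arc r xs i = set (take r (drop i xs))"
proof -
  have "i < length xs" using assms by linarith
  then have "rotate i xs = drop i xs @ take i xs" by (simp add: rotate_drop_take)
  then show ?thesis using assms by (simp add: arc_def)
qed

lemma lemA_list:
  assumes star: "\<forall>xs\<in>permutations_of_set X. \<exists>p<n. \<forall>i<n. arc r xs i \<in> T \<longleftrightarrow> off n i p < r"
    and n: "n = card X" and nr: "2*r+1 \<le> n" and r1: "1 \<le> r"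
    and xs: "xs = l1 @ l2 @ [z] @ q1 @ q2 @ w" "distinct xs" "set xs = X"
    and ll: "length l1 + length l2 = r - 1" and lq: "length q1 + length q2 = r - 1" and lm: "length l2 + length q1 = r - 1"
    and LT: "set (l1 @ l2 @ [z]) \<in> T" and RT: "set ([z] @ q1 @ q2) \<in> T"
  shows "set (l2 @ [z] @ q1) \<in> T"
proof -
  have xsP: "xs \<in> permutations_of_set X" using xs by auto
  have len: "length xs = n" using xs n by (metis distinct_card)
  obtain p where p: "p < n" "\<forall>i<n. arc r xs i \<in> T \<longleftrightarrow> off n i p < r" using star xsP by blast
  let ?a = "r - 1"
  have a0: "arc r xs 0 = set (l1 @ l2 @ [z])"
  proof -
    have "arc r xs 0 = set (take r xs)" using arc_nowrap[of 0 r xs] len nr r1 by simp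
    also have "take r xs = l1 @ l2 @ [z]" using xs ll r1
      by (simp add: take_append)
    finally show ?thesis .
  qed
  have aa: "arc r xs ?a = set ([z] @ q1 @ q2)"
  proof -
    have "arc r xs ?a = set (take r (drop ?a xs))" using arc_nowrap[of ?a r xs] len nr r1 by simp
    also have "drop ?a xs = z # q1 @ q2 @ w" using xs ll by simp
    also have "take r (z # q1 @ q2 @ w) = z # q1 @ q2" using lq r1
      by (cases r) (auto simp: take_append)
    finally show ?thesis by simp
  qed
  let ?b = "length l1"
  have ab: "arc r xs ?b = set (l2 @ [z] @ q1)"
  proof -
    have "arc r xs ?b = set (take r (drop ?b xs))" using arc_nowrap[of ?b r xs] len nr r1 ll by simp
    also have "drop ?b xs = l2 @ z # q1 @ q2 @ w" using xs by simp
    also have "take r (l2 @ z # q1 @ q2 @ w) = l2 @ z # q1"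
    proof -
      have "l2 @ z # q1 @ q2 @ w = (l2 @ z # q1) @ (q2 @ w)" by simp
      moreover have "length (l2 @ z # q1) = r" using lm r1 by auto
      ultimately show ?thesis by (metis append_eq_conv_conj)
    qed
    finally show ?thesis by simp
  qed
  have "off n 0 p < r" using p a0 LT nr by auto
  moreover have "off n ?a p < r"
  proof -
    have "?a < n" using nr by linarith
    then show ?thesis using p(2) aa RT by auto
  qed
  ultimately have "p = ?a" using p nr by (auto simp: off_def split: if_splits)
  then have "off n ?b p < r" using ll nr r1 by (auto simp: off_def)
  moreover have "?b < n" using ll nr by linarith
  ultimately show ?thesis using p(2) ab by metis
qed

lemma lemA:
  assumes star: "\<forall>xs\<in>permutations_of_set X. \<exists>p<n. \<forall>i<n. arc r xs i \<in> T \<longleftrightarrow> off n i p < r"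
    and fin: "finite X" and n: "n = card X" and nr: "2*r+1 \<le> n" and r1: "1 \<le> r"
    and T: "T \<subseteq> ksubsets X r"
    and L: "L \<in> T" and R: "R \<in> T" and LR: "L \<inter> R = {z}"
    and Pp: "Pp \<subseteq> L - {z}" and Q: "Q \<subseteq> R - {z}" and c: "card Pp + card Q = r - 1"
  shows "insert z (Pp \<union> Q) \<in> T"
proof -
  have LX: "L \<subseteq> X" "card L = r" using L T by (auto simp: ksubsets_def)
  have RX: "R \<subseteq> X" "card R = r" using R T by (auto simp: ksubsets_def)
  have fL: "finite L" "finite R" using LX RX fin finite_subset by auto
  have zL: "z \<in> L" "z \<in> R" using LR by auto
  have fP: "finite Pp" "finite Q" using fL Pp Q finite_subset by (meson Diff_subset order_trans)+
  define l1 where "l1 = sorted_list_of_set (L - {z} - Pp)"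
  define l2 where "l2 = sorted_list_of_set Pp"
  define q1 where "q1 = sorted_list_of_set Q"
  define q2 where "q2 = sorted_list_of_set (R - {z} - Q)"
  define w where "w = sorted_list_of_set (X - (L \<union> R))"
  define xs where "xs = l1 @ l2 @ [z] @ q1 @ q2 @ w"
  have s: "set l1 = L - {z} - Pp" "set l2 = Pp" "set q1 = Q" "set q2 = R - {z} - Q" "set w = X - (L \<union> R)"
    using fL fP fin by (auto simp: l1_def l2_def q1_def q2_def w_def)
  have d: "distinct l1" "distinct l2" "distinct q1" "distinct q2" "distinct w"
    by (auto simp: l1_def l2_def q1_def q2_def w_def)
  have cl1: "card (L - {z} - Pp) = r - 1 - card Pp"
  proof -
    have "card (L - {z} - Pp) = card (L - {z}) - card Pp" using Pp fP by (simp add: card_Diff_subset)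
    then show ?thesis using LX zL fL by simp
  qed
  have cq2: "card (R - {z} - Q) = r - 1 - card Q"
  proof -
    have "card (R - {z} - Q) = card (R - {z}) - card Q" using Q fP by (simp add: card_Diff_subset)
    then show ?thesis using RX zL fL by simp
  qed
  have len: "length l1 = r - 1 - card Pp" "length l2 = card Pp" "length q1 = card Q" "length q2 = r - 1 - card Q"
    using cl1 cq2 by (auto simp: l1_def l2_def q1_def q2_def)
  have dxs: "distinct xs" unfolding xs_def distinct_append set_append using d
  proof (intro conjI)
    show "set l1 \<inter> (set l2 \<union> (set [z] \<union> (set q1 \<union> (set q2 \<union> set w)))) = {}"
      unfolding s using Pp Q LR by auto
    show "set l2 \<inter> (set [z] \<union> (set q1 \<union> (set q2 \<union> set w))) = {}"
      unfolding s using Pp Q LR by auto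
    show "set [z] \<inter> (set q1 \<union> (set q2 \<union> set w)) = {}"
      unfolding s using Pp Q LR zL by auto
    show "set q1 \<inter> (set q2 \<union> set w) = {}"
      unfolding s using Pp Q LR zL by auto
    show "set q2 \<inter> set w = {}"
      unfolding s by auto
  qed auto
  have sxs: "set xs = X" unfolding xs_def using s Pp Q LR zL LX RX by auto
  have "set (l2 @ [z] @ q1) \<in> T"
  proof (rule lemA_list[OF star n nr r1 xs_def dxs sxs])
    show "length l1 + length l2 = r - 1" "length q1 + length q2 = r - 1" "length l2 + length q1 = r - 1"
      using len c by auto
    have "set (l1 @ l2 @ [z]) = L" using s Pp zL by auto
    then show "set (l1 @ l2 @ [z]) \<in> T" using L by simp
    have "set ([z] @ q1 @ q2) = R" using s Q zL by auto
    then show "set ([z] @ q1 @ q2) \<in> T" using R by simp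
  qed
  moreover have "set (l2 @ [z] @ q1) = insert z (Pp \<union> Q)" using s by auto
  ultimately show ?thesis by simp
qed

lemma lemB:
  assumes lemA: "\<And>L R z Pp Q. L\<in>T \<Longrightarrow> R\<in>T \<Longrightarrow> L\<inter>R={z} \<Longrightarrow> Pp \<subseteq> L - {z} \<Longrightarrow> Q \<subseteq> R-{z}
        \<Longrightarrow> card Pp + card Q = r-1 \<Longrightarrow> insert z (Pp \<union> Q) \<in> T"
    and T: "T \<subseteq> ksubsets X r" and fin: "finite X" and I: "intersecting T"
    and L: "L\<in>T" and R: "R\<in>T" and LR: "L\<inter>R={z}" and A: "A\<in>T" and zA: "z\<notin>A"
    and w: "w\<in>A" "w\<notin>L\<union>R"
  shows False
proof -
  have cs: "card L = r" "card R = r" "card A = r" "L \<subseteq> X" "R \<subseteq> X" "A \<subseteq> X"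
    using L R A T by (auto simp: ksubsets_def)
  have fs: "finite L" "finite R" "finite A" using cs fin finite_subset by auto
  have zL: "z \<in> L" "z \<in> R" using LR by auto
  have disj: "(A\<inter>L) \<inter> (A\<inter>R) = {}" using LR zA by auto
  have "(A\<inter>L) \<union> (A\<inter>R) \<subseteq> A - {w}" using w by auto
  then have "card ((A\<inter>L) \<union> (A\<inter>R)) \<le> card (A - {w})" using fs by (intro card_mono) auto
  then have ab: "card (A\<inter>L) + card (A\<inter>R) \<le> r - 1"
    using card_Un_disjoint[of "A\<inter>L" "A\<inter>R"] disj fs w cs by auto
  define UL where "UL = L - {z} - A"
  define UR where "UR = R - {z} - A"
  have cUL: "card UL = (r - 1) - card (A\<inter>L)"
  proof -
    have "card UL = card (L - {z}) - card ((L - {z}) \<inter> A)" unfolding UL_def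
      using fs by (simp add: card_Diff_subset_Int)
    moreover have "(L - {z}) \<inter> A = A \<inter> L" using zA by auto
    ultimately show ?thesis using cs zL fs by simp
  qed
  have cUR: "card UR = (r - 1) - card (A\<inter>R)"
  proof -
    have "card UR = card (R - {z}) - card ((R - {z}) \<inter> A)" unfolding UR_def
      using fs by (simp add: card_Diff_subset_Int)
    moreover have "(R - {z}) \<inter> A = A \<inter> R" using zA by auto
    ultimately show ?thesis using cs zL fs by simp
  qed
  have "r - 1 - card UL \<le> card UR" using cUL cUR ab by linarith
  then obtain Q where Q: "Q \<subseteq> UR" "card Q = r - 1 - card UL" "finite Q"
    by (meson obtain_subset_with_card_n)
  have "insert z (UL \<union> Q) \<in> T"
    by (rule lemA[OF L R LR]) (use Q cUL in \<open>auto simp: UL_def UR_def\<close>)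
  moreover have "A \<inter> insert z (UL \<union> Q) = {}" using zA Q by (auto simp: UL_def UR_def)
  ultimately show False using A I unfolding intersecting_def by blast
qed

lemma star_card:
  assumes "finite X" "z \<in> X" "1 \<le> r"
  shows "card {S \<in> ksubsets X r. z \<in> S} = (card X - 1) choose (r - 1)"
proof -
  have eq: "{S \<in> ksubsets X r. z \<in> S} = insert z ` {B. B \<subseteq> X - {z} \<and> card B = r - 1}"
  proof
    show "{S \<in> ksubsets X r. z \<in> S} \<subseteq> insert z ` {B. B \<subseteq> X - {z} \<and> card B = r - 1}"
    proof
      fix S assume S: "S \<in> {S \<in> ksubsets X r. z \<in> S}"
      then have "S \<subseteq> X" "card S = r" "z \<in> S" by (auto simp: ksubsets_def)
      moreover have "finite S" using \<open>S \<subseteq> X\<close> assms finite_subset by auto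
      ultimately have "S = insert z (S - {z})" "S - {z} \<subseteq> X - {z}" "card (S - {z}) = r - 1" by auto
      then show "S \<in> insert z ` {B. B \<subseteq> X - {z} \<and> card B = r - 1}" by blast
    qed
    show "insert z ` {B. B \<subseteq> X - {z} \<and> card B = r - 1} \<subseteq> {S \<in> ksubsets X r. z \<in> S}"
    proof
      fix S assume "S \<in> insert z ` {B. B \<subseteq> X - {z} \<and> card B = r - 1}"
      then obtain B where B: "S = insert z B" "B \<subseteq> X - {z}" "card B = r - 1" by blast
      have "finite B" using B assms finite_subset by (metis finite_Diff)
      moreover have "z \<notin> B" using B by auto
      ultimately have "card S = r" using B assms by auto
      then show "S \<in> {S \<in> ksubsets X r. z \<in> S}" using B assms by (auto simp: ksubsets_def)
    qed
  qed
  have inj: "inj_on (insert z) {B. B \<subseteq> X - {z} \<and> card B = r - 1}"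
    by (rule inj_onI) (metis Diff_insert_absorb mem_Collect_eq subset_Diff_insert)
  have "card {S \<in> ksubsets X r. z \<in> S} = card {B. B \<subseteq> X - {z} \<and> card B = r - 1}"
    unfolding eq using card_image[OF inj] .
  also have "\<dots> = card (X - {z}) choose (r - 1)" using n_subsets assms by blast
  finally show ?thesis using assms by simp
qed

lemma binom_gap:
  assumes "2 \<le> r" "2*r+1 \<le> n"
  shows "(2*r - 1) choose r < (n - 1) choose (r - 1)"
proof -
  have "(2*r - 1) choose r = (2*r - 1) choose (r - 1)"
    using binomial_symmetric[of r "2*r-1"] assms by (simp add: numeral_2_eq_2)
  also have "\<dots> < ((2*r - 1) choose (r - 1)) + ((2*r - 1) choose (r - 2))"
    using assms by simp
  also have "\<dots> = (2*r) choose (r - 1)"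
  proof -
    have "(Suc (2*r - 1) choose Suc (r - 2)) = ((2*r - 1) choose (r - 2)) + ((2*r - 1) choose Suc (r - 2))"
      by simp
    moreover have "Suc (2*r - 1) = 2*r" "Suc (r - 2) = r - 1" using assms by auto
    ultimately show ?thesis by simp
  qed
  also have "\<dots> \<le> (n - 1) choose (r - 1)" using assms by (intro binomial_right_mono) auto
  finally show ?thesis .
qed

theorem ekr_unique:
  assumes fin: "finite X" and n: "n = card X" and r1: "1 \<le> r" and nr: "2*r+1 \<le> n"
    and T: "T \<subseteq> ksubsets X r" and I: "intersecting T" and cT: "card T = (n - 1) choose (r - 1)"
  shows "\<exists>z\<in>X. T = {S \<in> ksubsets X r. z \<in> S}"
proof -
  have star: "\<forall>xs\<in>permutations_of_set X. \<exists>p<n. \<forall>i<n. arc r xs i \<in> T \<longleftrightarrow> off n i p < r"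
    using katona(2)[OF fin n r1 _ T I cT nr] nr by auto
  note lA = lemA[OF star fin n nr r1 T]
  have finT: "finite T"
  proof -
    have "ksubsets X r \<subseteq> Pow X" by (auto simp: ksubsets_def)
    then show ?thesis using T fin by (meson finite_Pow_iff finite_subset)
  qed
  obtain xs where xs: "xs \<in> permutations_of_set X"
    using fin permutations_of_set_empty_iff by blast
  have xsl: "length xs = n" "distinct xs" using xs n length_finite_permutations_of_set
    by (auto simp: permutations_of_set_def)
  obtain p where p: "p < n" "\<forall>i<n. arc r xs i \<in> T \<longleftrightarrow> off n i p < r" using star xs by blast
  define i2 where "i2 = (if r - 1 \<le> p then p - (r - 1) else n + p - (r - 1))"
  have i2: "i2 < n" "off n i2 p = r - 1" using p nr r1 by (auto simp: i2_def off_def)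
  define L where "L = arc r xs i2"
  define R where "R = arc r xs p"
  define z where "z = xs ! p"
  have rn: "r \<le> n" using nr by linarith
  have LT: "L \<in> T" using p i2 r1 unfolding L_def by auto
  have RT: "R \<in> T" using p r1 unfolding R_def by (auto simp: off_def)
  have zX: "z \<in> X" using xs p xsl unfolding z_def by (metis nth_mem permutations_of_setD(1))
  have LR: "L \<inter> R = {z}"
  proof
    show "{z} \<subseteq> L \<inter> R" unfolding L_def R_def z_def
      using arc_mem[OF xsl i2(1) rn p(1)] arc_mem[OF xsl p(1) rn p(1)] i2 r1 by (auto simp: off_def)
    show "L \<inter> R \<subseteq> {z}"
    proof
      fix x assume "x \<in> L \<inter> R"
      then obtain q q' where q: "q < n" "off n i2 q < r" "x = xs ! q" "q' < n" "off n p q' < r" "x = xs ! q'"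
        unfolding L_def R_def using arc_char[OF xsl(1) i2(1) rn] arc_char[OF xsl(1) p(1) rn] by auto
      then have "q = q'" using xsl nth_eq_iff_index_eq by metis
      then have "q = p" using q i2 p nr by (auto simp: off_def split: if_splits)
      then show "x \<in> {z}" using q z_def by simp
    qed
  qed
  have Bl: False if "A \<in> T" "z \<notin> A" "w \<in> A" "w \<notin> L' \<union> R'" "L' \<in> T" "R' \<in> T" "L' \<inter> R' = {z}" for A w L' R'
    by (rule lemB[OF lA T fin I that(5,6,7,1,2,3,4)]) auto
  have allz: "z \<in> A" if A: "A \<in> T" for A
  proof (rule ccontr)
    assume zA: "z \<notin> A"
    have cA: "card A = r" "A \<subseteq> X" using A T by (auto simp: ksubsets_def)
    have fA: "finite A" using cA fin finite_subset by auto
    show False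
    proof (cases "A \<subseteq> L \<union> R")
      case False
      then obtain w where "w \<in> A" "w \<notin> L \<union> R" by blast
      then show False using Bl[OF A zA _ _ LT RT LR] by blast
    next
      case AS: True
      show False
      proof (cases "r = 1")
        case True
        have "card L = 1" using LT T True by (auto simp: ksubsets_def)
        moreover have "z \<in> L" using LR by auto
        ultimately have "L = {z}" by (metis card_1_singletonE singletonD)
        moreover have "A \<inter> L \<noteq> {}" using I A LT unfolding intersecting_def by blast
        ultimately show False using zA by auto
      next
        case False
        then have r2: "2 \<le> r" using r1 by simp
        have cL: "card L = r" "card R = r" "L \<subseteq> X" "R \<subseteq> X" using LT RT T by (auto simp: ksubsets_def)
        have fLR: "finite (L \<union> R)" using cL fin finite_subset by auto
        have cLR: "card (L \<union> R) = 2*r - 1"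
        proof -
          have "card (L \<union> R) + card (L \<inter> R) = card L + card R"
            using card_Un_Int[of L R] cL fin finite_subset by metis
          then show ?thesis using LR cL by simp
        qed
        have "\<exists>M\<in>T. \<not> M \<subseteq> L \<union> R"
        proof (rule ccontr)
          assume "\<not> (\<exists>M\<in>T. \<not> M \<subseteq> L \<union> R)"
          then have "T \<subseteq> {B. B \<subseteq> L \<union> R \<and> card B = r}" using T by (auto simp: ksubsets_def)
          then have "card T \<le> card {B. B \<subseteq> L \<union> R \<and> card B = r}"
            using fLR by (intro card_mono) auto
          also have "\<dots> = (2*r - 1) choose r" using n_subsets[OF fLR] cLR by simp
          finally show False using binom_gap[OF r2 nr] cT by simp
        qed
        then obtain M u0 where M: "M \<in> T" "u0 \<in> M" "u0 \<notin> L \<union> R" by blast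
        have zM: "z \<in> M"
        proof (rule ccontr)
          assume "z \<notin> M"
          then show False using Bl[OF M(1) _ M(2,3) LT RT LR] by blast
        qed
        have cM: "card M = r" "M \<subseteq> X" using M T by (auto simp: ksubsets_def)
        have fM: "finite M" using cM fin finite_subset by auto
        define U where "U = (L \<union> R) - {z} - M"
        have cMi: "card (M \<inter> ((L \<union> R) - {z})) \<le> r - 2"
        proof -
          have "M \<inter> ((L \<union> R) - {z}) \<subseteq> M - {u0, z}" using M by auto
          then have "card (M \<inter> ((L \<union> R) - {z})) \<le> card (M - {u0, z})" using fM by (intro card_mono) auto
          also have "\<dots> = r - 2" using cM M zM fM LR by (auto simp: card_Diff_subset)
          finally show ?thesis .
        qed
        have cU: "r \<le> card U"
        proof -
          have "card U = card ((L \<union> R) - {z}) - card (((L \<union> R) - {z}) \<inter> M)"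
            unfolding U_def using fLR by (simp add: card_Diff_subset_Int)
          moreover have "card ((L \<union> R) - {z}) = 2*r - 2"
          proof -
            have "z \<in> L \<union> R" using LR by auto
            then show ?thesis using cLR fLR card_Diff_singleton[of z "L \<union> R"] by simp
          qed
          moreover have "card (((L \<union> R) - {z}) \<inter> M) = card (M \<inter> ((L \<union> R) - {z}))" by (simp add: Int_commute)
          ultimately show ?thesis using cMi r2 by linarith
        qed
        have "\<not> A \<subseteq> M"
        proof
          assume "A \<subseteq> M"
          then have "A \<subseteq> M \<inter> ((L \<union> R) - {z})" using AS zA by auto
          then have "card A \<le> r - 2" using cMi fM by (meson card_mono finite_Int le_trans)
          then show False using cA r2 by simp
        qed
        then obtain u where u: "u \<in> A" "u \<notin> M" by blast
        have uU: "u \<in> U" using u AS zA unfolding U_def by auto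
        have "r - 1 \<le> card (U - {u})" using cU uU fLR unfolding U_def by auto
        then obtain V where V: "V \<subseteq> U - {u}" "card V = r - 1" "finite V"
          by (meson obtain_subset_with_card_n)
        have L'T: "insert z ((V \<inter> L) \<union> (V \<inter> R)) \<in> T"
        proof (rule lA[OF LT RT LR])
          show "V \<inter> L \<subseteq> L - {z}" "V \<inter> R \<subseteq> R - {z}" using V unfolding U_def by auto
          have "card ((V \<inter> L) \<union> (V \<inter> R)) = card (V \<inter> L) + card (V \<inter> R)"
            using V LR unfolding U_def by (intro card_Un_disjoint) auto
          moreover have "(V \<inter> L) \<union> (V \<inter> R) = V" using V unfolding U_def by auto
          ultimately show "card (V \<inter> L) + card (V \<inter> R) = r - 1" using V by simp
        qed
        have VLR: "(V \<inter> L) \<union> (V \<inter> R) = V" using V unfolding U_def by auto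
        have L'M: "insert z V \<inter> M = {z}" using V zM unfolding U_def by auto
        show False using Bl[OF A zA u(1) _ _ M(1) L'M] L'T VLR u V zA by auto
      qed
    qed
  qed
  have sub: "T \<subseteq> {S \<in> ksubsets X r. z \<in> S}" using T allz by auto
  have "card {S \<in> ksubsets X r. z \<in> S} = (n - 1) choose (r - 1)" using star_card[OF fin zX r1] n by simp
  moreover have "finite {S \<in> ksubsets X r. z \<in> S}"
  proof -
    have "{S \<in> ksubsets X r. z \<in> S} \<subseteq> Pow X" by (auto simp: ksubsets_def)
    then show ?thesis using fin by (meson finite_Pow_iff finite_subset)
  qed
  ultimately have "T = {S \<in> ksubsets X r. z \<in> S}" using card_subset_eq sub cT by metis
  then show ?thesis using zX by blast
qed

lemma inter_of_card:
  assumes "P \<subseteq> Z" "Q \<subseteq> Z" "finite Z" "card Z < card P + card Q"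
  shows "P \<inter> Q \<noteq> {}"
proof
  assume "P \<inter> Q = {}"
  have "finite P" "finite Q" using assms finite_subset by auto
  then have "card (P \<union> Q) = card P + card Q" using \<open>P \<inter> Q = {}\<close> card_Un_disjoint by blast
  moreover have "card (P \<union> Q) \<le> card Z" using assms by (intro card_mono) auto
  ultimately show False using assms by simp
qed

context
  fixes n k m :: nat
  assumes k0: "0 < k" and kn: "k \<le> n" and nk: "n + 3 < 2*k" and nm: "n < m"
begin

abbreviation "Nn \<equiv> {1..n}"
abbreviation "Y \<equiv> {n+1..m}"
abbreviation "s \<equiv> 2*k - n - 1"

lemma cardY: "card Y = m - n" by simp

lemma NY: "Nn \<inter> Y = {}" "Nn \<union> Y = {1..m}" using nm by auto

definition G :: "nat \<Rightarrow> nat \<Rightarrow> nat set set" where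
  "G t i = {A \<union> B \<union> {t} | A B. A \<in> ksubsets ({1..n} - {t}) (k-i-1) \<and> B \<in> ksubsets {n+1..m} i}"

lemma H_eq: "H m n k t = ksubsets Nn k \<union> (\<Union>i\<in>{1..s}. G t i)"
  unfolding H_def G_def by simp

lemma G_img: "G t i = (\<lambda>(A,B). A \<union> B \<union> {t}) ` (ksubsets (Nn - {t}) (k-i-1) \<times> ksubsets Y i)"
  unfolding G_def by auto

lemma G_level:
  assumes "t \<in> Nn" "X \<in> G t i"
  shows "card (X \<inter> Y) = i" "t \<in> X" "X \<inter> Nn = insert t (X \<inter> Nn - {t})"
    "card (X \<inter> Nn - {t}) = k - i - 1" "X - Nn = X \<inter> Y"
proof -
  obtain A B where X: "X = A \<union> B \<union> {t}" "A \<subseteq> Nn - {t}" "card A = k-i-1" "B \<subseteq> Y" "card B = i"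
    using assms(2) unfolding G_def ksubsets_def by blast
  have "X \<inter> Y = B" using X assms(1) by auto
  moreover have "X \<inter> Nn - {t} = A" using X assms(1) by auto
  ultimately show "card (X \<inter> Y) = i" "t \<in> X"
    "X \<inter> Nn = insert t (X \<inter> Nn - {t})" "card (X \<inter> Nn - {t}) = k - i - 1" "X - Nn = X \<inter> Y"
    using X assms(1) by auto
qed

lemma card_G:
  assumes "t \<in> Nn"
  shows "card (G t i) = ((n - 1) choose (k-i-1)) * ((m - n) choose i)"
proof -
  let ?f = "\<lambda>(A,B). A \<union> B \<union> {t}"
  have inj: "inj_on ?f (ksubsets (Nn - {t}) (k-i-1) \<times> ksubsets Y i)"
  proof (rule inj_onI)
    fix x y assume xy: "x \<in> ksubsets (Nn - {t}) (k-i-1) \<times> ksubsets Y i"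
      "y \<in> ksubsets (Nn - {t}) (k-i-1) \<times> ksubsets Y i" "?f x = ?f y"
    obtain A B A' B' where e: "x = (A,B)" "y = (A',B')" by fastforce
    have s: "A \<subseteq> Nn - {t}" "B \<subseteq> Y" "A' \<subseteq> Nn - {t}" "B' \<subseteq> Y"
      using xy e by (auto simp: ksubsets_def)
    have 1: "A = (A \<union> B \<union> {t}) \<inter> Nn - {t}" "B = (A \<union> B \<union> {t}) \<inter> Y" using s assms by auto
    have 2: "A' = (A' \<union> B' \<union> {t}) \<inter> Nn - {t}" "B' = (A' \<union> B' \<union> {t}) \<inter> Y" using s assms by auto
    have 3: "A \<union> B \<union> {t} = A' \<union> B' \<union> {t}" using e xy(3) by simp
    have "A = A'" using 1(1) 2(1) 3 by metis
    moreover have "B = B'" using 1(2) 2(2) 3 by metis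
    ultimately show "x = y" using e by simp
  qed
  have "card (G t i) = card (ksubsets (Nn - {t}) (k-i-1)) * card (ksubsets Y i)"
    unfolding G_img using card_image[OF inj] by (simp add: card_cartesian_product)
  also have "\<dots> = ((n - 1) choose (k-i-1)) * ((m - n) choose i)"
    using assms by (simp add: ksubsets_def n_subsets)
  finally show ?thesis .
qed

lemma finite_ksub: "finite X \<Longrightarrow> finite (ksubsets X j)"
proof -
  assume "finite X"
  moreover have "ksubsets X j \<subseteq> Pow X" by (auto simp: ksubsets_def)
  ultimately show ?thesis by (meson finite_Pow_iff finite_subset)
qed

lemma finite_G: "finite (G t i)"
  unfolding G_img by (intro finite_imageI finite_cartesian_product finite_ksub) auto

lemma card_H:
  assumes t: "t \<in> Nn"
  shows "card (H m n k t) = h m n k"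
proof -
  have disj1: "ksubsets Nn k \<inter> (\<Union>i\<in>{1..s}. G t i) = {}"
  proof -
    have "X \<notin> ksubsets Nn k" if "X \<in> G t i" "1 \<le> i" for X i
    proof
      assume "X \<in> ksubsets Nn k"
      then have "X \<inter> Y = {}" using NY by (auto simp: ksubsets_def)
      then show False using G_level(1)[OF t that(1)] that(2) by simp
    qed
    then show ?thesis by auto
  qed
  have cU: "card (\<Union>i\<in>{1..s}. G t i) = (\<Sum>i\<in>{1..s}. card (G t i))"
  proof (rule card_UN_disjoint)
    show "\<forall>i\<in>{1..s}. \<forall>j\<in>{1..s}. i \<noteq> j \<longrightarrow> G t i \<inter> G t j = {}"
      using G_level(1)[OF t] by blast
  qed (auto simp: finite_G)
  have "card (H m n k t) = card (ksubsets Nn k) + card (\<Union>i\<in>{1..s}. G t i)"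
    unfolding H_eq using disj1 by (intro card_Un_disjoint) (auto simp: finite_G finite_ksub)
  also have "\<dots> = (n choose k) + (\<Sum>i\<in>{1..s}. ((n - 1) choose (k-i-1)) * ((m - n) choose i))"
    using cU card_G[OF t] by (simp add: ksubsets_def n_subsets)
  finally show ?thesis unfolding h_def .
qed

lemma H_mnk:
  assumes t: "t \<in> Nn"
  shows "mnk_intersecting m n k (H m n k t)"
  unfolding mnk_intersecting_def
proof (intro conjI)
  show "ksubsets Nn k \<subseteq> H m n k t" unfolding H_eq by auto
  show "H m n k t \<subseteq> ksubsets {1..m} k"
  proof
    fix X assume "X \<in> H m n k t"
    then consider "X \<in> ksubsets Nn k" | i where "i \<in> {1..s}" "X \<in> G t i" unfolding H_eq by blast
    then show "X \<in> ksubsets {1..m} k"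
    proof cases
      case 1 then show ?thesis using nm by (auto simp: ksubsets_def)
    next
      case 2
      obtain A B where X: "X = A \<union> B \<union> {t}" "A \<subseteq> Nn - {t}" "card A = k-i-1" "B \<subseteq> Y" "card B = i"
        using 2 unfolding G_def ksubsets_def by blast
      have fin: "finite A" "finite B" using X by (meson finite_Diff finite_atLeastAtMost finite_subset)+
      have AB: "A \<inter> B = {}" using X(2,4) NY(1) by blast
      have "card (A \<union> B) = card A + card B" using AB fin by (intro card_Un_disjoint) auto
      moreover have "t \<notin> A \<union> B" using X t by auto
      ultimately have "card X = Suc (card A + card B)" using X fin by simp
      then have "card X = k" using X 2 k0 kn nk by auto
      moreover have "X \<subseteq> {1..m}" using X t nm by auto
      ultimately show ?thesis by (simp add: ksubsets_def)
    qed
  qed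
  show "intersecting (H m n k t)" unfolding intersecting_def
  proof (intro ballI)
    have gn: "card (X \<inter> Nn) \<ge> n - k + 1" "X \<inter> Nn \<subseteq> Nn" "t \<in> X" if "X \<in> G t i" "i \<in> {1..s}" for X i
    proof -
      have "card (X \<inter> Nn) = Suc (k - i - 1)"
      proof -
        have "card (insert t (X \<inter> Nn - {t})) = Suc (card (X \<inter> Nn - {t}))"
          by (rule card_insert_disjoint) auto
        then show ?thesis using G_level(3,4)[OF t that(1)] by simp
      qed
      then show "card (X \<inter> Nn) \<ge> n - k + 1" using that(2) nk by auto
      show "X \<inter> Nn \<subseteq> Nn" by auto
      show "t \<in> X" using G_level(2)[OF t that(1)] .
    qed
    fix P Q assume PQ: "P \<in> H m n k t" "Q \<in> H m n k t"
    consider "P \<in> ksubsets Nn k" | i where "i \<in> {1..s}" "P \<in> G t i" using PQ unfolding H_eq by blast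
    then show "P \<inter> Q \<noteq> {}"
    proof cases
      case P1: 1
      consider "Q \<in> ksubsets Nn k" | j where "j \<in> {1..s}" "Q \<in> G t j" using PQ unfolding H_eq by blast
      then show ?thesis
      proof cases
        case 1 then show ?thesis using P1 nk by (intro inter_of_card[of _ Nn]) (auto simp: ksubsets_def)
      next
        case 2
        have "P \<inter> (Q \<inter> Nn) \<noteq> {}" using P1 gn[OF 2(2,1)] nk kn
          by (intro inter_of_card[of _ Nn]) (auto simp: ksubsets_def)
        then show ?thesis by auto
      qed
    next
      case P2: 2
      consider "Q \<in> ksubsets Nn k" | j where "j \<in> {1..s}" "Q \<in> G t j" using PQ unfolding H_eq by blast
      then show ?thesis
      proof cases
        case 1
        have "(P \<inter> Nn) \<inter> Q \<noteq> {}" using 1 gn[OF P2(2,1)] nk kn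
          by (intro inter_of_card[of _ Nn]) (auto simp: ksubsets_def)
        then show ?thesis by auto
      next
        case 2 then show ?thesis using gn(3)[OF P2(2,1)] gn(3)[OF 2(2,1)] by auto
      qed
    qed
  qed
qed

end

context
  fixes n k m :: nat
  assumes k0: "0 < k" and kn: "k \<le> n" and nk: "n + 3 < 2*k" and nm: "n < m"
    and big: "2*2^n*(2*k-n-1)*(2*k-n-1) + (2*k-n-1) \<le> m - n"
begin

abbreviation "N1 \<equiv> {1..n}"
abbreviation "YY \<equiv> {n+1..m}"
abbreviation "ss \<equiv> 2*k - n - 1"

lemma sfacts: "3 \<le> ss" "ss < k" "k - ss = n - k + 1" "2*(n-k+1)+1 \<le> n" "1 \<le> n - k + 1"
  using k0 kn nk by auto

lemma aux_le: assumes "1 \<le> (x::nat)" "1 \<le> P" shows "x \<le> 2*P*x*x"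
proof -
  have "1 \<le> 2*P*x" using assms by simp
  then show ?thesis using mult_le_mono1[of 1 "2*P*x" x] by simp
qed

lemma bigs: "2*ss \<le> m - n"
proof -
  have "ss \<le> 2*2^n*ss*ss" using aux_le[of ss "2^n"] sfacts by simp
  then show ?thesis using big by linarith
qed

context
  fixes F assumes FI: "mnk_intersecting m n k F"
begin

lemma F_basic: "A \<in> F \<Longrightarrow> A \<subseteq> {1..m} \<and> card A = k"
  using FI by (auto simp: mnk_intersecting_def ksubsets_def)

lemma F_int: "A \<in> F \<Longrightarrow> B \<in> F \<Longrightarrow> A \<inter> B \<noteq> {}"
  using FI by (auto simp: mnk_intersecting_def intersecting_def)

lemma F_all: "ksubsets N1 k \<subseteq> F"
  using FI by (auto simp: mnk_intersecting_def)

lemma finF: "finite F"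
proof -
  have "F \<subseteq> ksubsets {1..m} k" using FI by (auto simp: mnk_intersecting_def)
  then show ?thesis using finite_ksub[OF k0 kn nk nm] by (meson finite_atLeastAtMost finite_subset)
qed

lemma F_split: "A \<in> F \<Longrightarrow> A = (A \<inter> N1) \<union> (A \<inter> YY) \<and> card (A \<inter> N1) + card (A \<inter> YY) = k"
proof -
  assume A: "A \<in> F"
  have "A \<subseteq> {1..m}" "card A = k" using F_basic[OF A] by auto
  then have e: "A = (A \<inter> N1) \<union> (A \<inter> YY)" using NY[OF k0 kn nk nm] by auto
  have "card ((A \<inter> N1) \<union> (A \<inter> YY)) = card (A \<inter> N1) + card (A \<inter> YY)"
    by (rule card_Un_disjoint) auto
  then show ?thesis using e \<open>card A = k\<close> by metis
qed

lemma F_lev: "A \<in> F \<Longrightarrow> card (A \<inter> YY) \<le> ss"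
proof (rule ccontr)
  assume A: "A \<in> F" and "\<not> card (A \<inter> YY) \<le> ss"
  then have "card (A \<inter> N1) \<le> n - k" using F_split[OF A] sfacts by linarith
  moreover have "card (N1 - A) = n - card (A \<inter> N1)"
    by (simp add: card_Diff_subset_Int Int_commute)
  ultimately have "k \<le> card (N1 - A)" using kn by linarith
  then obtain P where P: "P \<subseteq> N1 - A" "card P = k" by (meson obtain_subset_with_card_n)
  then have "P \<in> F" using F_all by (auto simp: ksubsets_def)
  moreover have "P \<inter> A = {}" using P by auto
  ultimately show False using F_int A by blast
qed

definition fib :: "nat set \<Rightarrow> nat set set" where
  "fib S = {A \<in> F. card (A \<inter> YY) = ss \<and> A \<inter> N1 = S}"

lemma fib_sub: "fib S \<subseteq> (\<lambda>B. S \<union> B) ` ksubsets YY ss"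
proof
  fix A assume "A \<in> fib S"
  then have A: "A \<in> F" "card (A \<inter> YY) = ss" "A \<inter> N1 = S" by (auto simp: fib_def)
  then have "A = S \<union> (A \<inter> YY)" using F_split[OF A(1)] by auto
  moreover have "A \<inter> YY \<in> ksubsets YY ss" using A by (auto simp: ksubsets_def)
  ultimately show "A \<in> (\<lambda>B. S \<union> B) ` ksubsets YY ss" by blast
qed

lemma fib_le: "card (fib S) \<le> (m - n) choose ss"
proof -
  have "card (fib S) \<le> card ((\<lambda>B. S \<union> B) ` ksubsets YY ss)"
    using fib_sub by (intro card_mono finite_imageI finite_ksub[OF k0 kn nk nm]) auto
  also have "\<dots> \<le> card (ksubsets YY ss)" by (rule card_image_le) (rule finite_ksub[OF k0 kn nk nm], simp)
  also have "\<dots> = (m - n) choose ss" by (simp add: ksubsets_def n_subsets)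
  finally show ?thesis .
qed

lemma fib_cross:
  assumes C: "C \<subseteq> YY" "card C \<le> ss" and hit: "\<forall>A\<in>fib S. A \<inter> C \<noteq> {}"
  shows "card (fib S) \<le> ss * ((m - n - 1) choose (ss - 1))"
proof -
  have finC: "finite C" using C finite_subset by auto
  have "fib S \<subseteq> (\<Union>y\<in>C. (\<lambda>B. S \<union> B) ` {B \<in> ksubsets YY ss. y \<in> B})"
  proof
    fix A assume A: "A \<in> fib S"
    then have "A \<in> (\<lambda>B. S \<union> B) ` ksubsets YY ss" using fib_sub by blast
    then obtain B where B: "A = S \<union> B" "B \<in> ksubsets YY ss" by blast
    have "S \<subseteq> N1" using A by (auto simp: fib_def)
    then have "S \<inter> C = {}" using C NY[OF k0 kn nk nm] by blast
    then obtain y where "y \<in> C" "y \<in> B" using hit A B by blast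
    then show "A \<in> (\<Union>y\<in>C. (\<lambda>B. S \<union> B) ` {B \<in> ksubsets YY ss. y \<in> B})" using B by blast
  qed
  then have "card (fib S) \<le> card (\<Union>y\<in>C. (\<lambda>B. S \<union> B) ` {B \<in> ksubsets YY ss. y \<in> B})"
    using finC by (intro card_mono) (auto intro!: finite_imageI simp: finite_ksub[OF k0 kn nk nm])
  also have "\<dots> \<le> (\<Sum>y\<in>C. card ((\<lambda>B. S \<union> B) ` {B \<in> ksubsets YY ss. y \<in> B}))"
    by (rule card_UN_le[OF finC])
  also have "\<dots> \<le> (\<Sum>y\<in>C. (m - n - 1) choose (ss - 1))"
  proof (rule sum_mono)
    fix y assume y: "y \<in> C"
    have "card ((\<lambda>B. S \<union> B) ` {B \<in> ksubsets YY ss. y \<in> B}) \<le> card {B \<in> ksubsets YY ss. y \<in> B}"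
      by (rule card_image_le) (auto simp: finite_ksub[OF k0 kn nk nm])
    also have "\<dots> = (card YY - 1) choose (ss - 1)"
      using star_card[of YY y ss] y C sfacts by auto
    finally show "card ((\<lambda>B. S \<union> B) ` {B \<in> ksubsets YY ss. y \<in> B}) \<le> (m - n - 1) choose (ss - 1)" by simp
  qed
  also have "\<dots> = card C * ((m - n - 1) choose (ss - 1))" by simp
  also have "\<dots> \<le> ss * ((m - n - 1) choose (ss - 1))" using C by simp
  finally show ?thesis .
qed

lemma fib_trace: "A \<in> fib S \<Longrightarrow> A \<in> F \<and> A = S \<union> (A \<inter> YY) \<and> S \<subseteq> N1 \<and> card (A \<inter> YY) = ss"
proof -
  assume A: "A \<in> fib S"
  then have "A \<in> F" "card (A \<inter> YY) = ss" "A \<inter> N1 = S" by (auto simp: fib_def)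
  then show ?thesis using F_split[of A] by auto
qed

definition TH :: "nat set set" where
  "TH = {S \<in> ksubsets N1 (n-k+1). ss * ((m-n-1) choose (ss-1)) < card (fib S)}"

lemma TH_sub: "TH \<subseteq> ksubsets N1 (n-k+1)" by (auto simp: TH_def)

lemma TH_int: "intersecting TH"
  unfolding intersecting_def
proof (intro ballI)
  fix S1 S2 assume S: "S1 \<in> TH" "S2 \<in> TH"
  show "S1 \<inter> S2 \<noteq> {}"
  proof
    assume disj: "S1 \<inter> S2 = {}"
    have "fib S1 \<noteq> {}" using S(1) by (auto simp: TH_def)
    then obtain A0 where A0: "A0 \<in> fib S1" by blast
    note A0t = fib_trace[OF A0]
    have "\<forall>A\<in>fib S2. A \<inter> (A0 \<inter> YY) \<noteq> {}"
    proof
      fix A assume A: "A \<in> fib S2"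
      note At = fib_trace[OF A]
      have "A \<inter> A0 \<noteq> {}" using F_int At A0t by blast
      then obtain x where x: "x \<in> A" "x \<in> A0" by blast
      show "A \<inter> (A0 \<inter> YY) \<noteq> {}"
      proof (cases "x \<in> S2")
        case True
        then have "x \<in> N1" using At by auto
        then have "x \<in> S1" using x A0t by auto
        then show ?thesis using True disj by auto
      next
        case False
        then have "x \<in> YY" using x At by auto
        then show ?thesis using x by auto
      qed
    qed
    then have "card (fib S2) \<le> ss * ((m-n-1) choose (ss-1))"
      using fib_cross[of "A0 \<inter> YY" S2] A0t by auto
    then show False using S(2) by (auto simp: TH_def)
  qed
qed

lemma star_case:
  assumes t: "t \<in> N1" and THs: "TH = {S \<in> ksubsets N1 (n-k+1). t \<in> S}"
  shows "F \<subseteq> H m n k t"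
proof
  fix A assume A: "A \<in> F"
  note As = F_split[OF A]
  show "A \<in> H m n k t"
  proof (cases "A \<inter> YY = {}")
    case True
    then have "A \<in> ksubsets N1 k" using As by (auto simp: ksubsets_def)
    then show ?thesis by (simp add: H_def)
  next
    case False
    define i where "i = card (A \<inter> YY)"
    have i1: "1 \<le> i" using False unfolding i_def by (simp add: Suc_le_eq card_gt_0_iff)
    have iss: "i \<le> ss" using F_lev[OF A] unfolding i_def .
    have cS: "card (A \<inter> N1) = k - i" using As unfolding i_def by linarith
    have tA: "t \<in> A"
    proof (rule ccontr)
      assume tA: "t \<notin> A"
      have "card (N1 - (A \<inter> N1) - {t}) = n - (k - i) - 1"
      proof -
        have "card (N1 - (A \<inter> N1)) = n - (k - i)" using cS by (simp add: card_Diff_subset)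
        moreover have "card (N1 - (A \<inter> N1) - {t}) = card (N1 - (A \<inter> N1)) - 1"
          by (rule card_Diff_singleton) (use t tA in auto)
        ultimately show ?thesis by simp
      qed
      then have "n - k \<le> card (N1 - (A \<inter> N1) - {t})" using i1 iss sfacts by linarith
      then obtain P where P: "P \<subseteq> N1 - (A \<inter> N1) - {t}" "card P = n - k" "finite P"
        by (meson obtain_subset_with_card_n)
      have S'TH: "insert t P \<in> TH"
      proof -
        have "t \<notin> P" using P by auto
        then have "card (insert t P) = n - k + 1" using P by simp
        then show ?thesis unfolding THs using P t by (auto simp: ksubsets_def)
      qed
      have "\<forall>A'\<in>fib (insert t P). A' \<inter> (A \<inter> YY) \<noteq> {}"
      proof
        fix A' assume A': "A' \<in> fib (insert t P)"
        note A't = fib_trace[OF A']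
        have "A' \<inter> A \<noteq> {}" using F_int A't A by blast
        then obtain x where x: "x \<in> A'" "x \<in> A" by blast
        show "A' \<inter> (A \<inter> YY) \<noteq> {}"
        proof (cases "x \<in> insert t P")
          case True
          then show ?thesis using x P tA by auto
        next
          case False
          then have "x \<in> YY" using x A't by auto
          then show ?thesis using x by auto
        qed
      qed
      then have "card (fib (insert t P)) \<le> ss * ((m-n-1) choose (ss-1))"
        using fib_cross[of "A \<inter> YY" "insert t P"] iss unfolding i_def by auto
      then show False using S'TH by (auto simp: TH_def)
    qed
    have "A = (A \<inter> N1 - {t}) \<union> (A \<inter> YY) \<union> {t}" using As tA t by auto
    moreover have "A \<inter> N1 - {t} \<in> ksubsets (N1 - {t}) (k - i - 1)"
      using cS tA t by (auto simp: ksubsets_def card_Diff_singleton)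
    moreover have "A \<inter> YY \<in> ksubsets YY i" unfolding i_def by (auto simp: ksubsets_def)
    moreover have "i \<in> {1..2*k-n-1}" using i1 iss by auto
    ultimately show ?thesis unfolding H_def by blast
  qed
qed

lemma card_low: "card {A\<in>F. A \<inter> YY \<noteq> {} \<and> card (A \<inter> YY) < ss} \<le> 2^n * (ss * ((m-n) choose (ss-1)))"
proof -
  define W where "W = {B. B \<subseteq> YY \<and> card B < ss}"
  have sub: "{A\<in>F. A \<inter> YY \<noteq> {} \<and> card (A \<inter> YY) < ss} \<subseteq> (\<lambda>(P,B). P \<union> B) ` (Pow N1 \<times> W)"
  proof
    fix A assume "A \<in> {A\<in>F. A \<inter> YY \<noteq> {} \<and> card (A \<inter> YY) < ss}"
    then have A: "A \<in> F" "card (A \<inter> YY) < ss" by auto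
    have "A = (\<lambda>(P,B). P \<union> B) (A \<inter> N1, A \<inter> YY)" using F_split[OF A(1)] by simp
    moreover have "(A \<inter> N1, A \<inter> YY) \<in> Pow N1 \<times> W" using A(2) by (auto simp: W_def)
    ultimately show "A \<in> (\<lambda>(P,B). P \<union> B) ` (Pow N1 \<times> W)" by blast
  qed
  have WU: "W = (\<Union>i\<in>{..<ss}. {B. B \<subseteq> YY \<and> card B = i})" by (auto simp: W_def)
  have finW: "finite W" unfolding W_def by (rule finite_subset[of _ "Pow YY"]) auto
  have "card W \<le> (\<Sum>i\<in>{..<ss}. card {B. B \<subseteq> YY \<and> card B = i})"
    unfolding WU by (rule card_UN_le) simp
  also have "\<dots> = (\<Sum>i\<in>{..<ss}. (m - n) choose i)" by (simp add: n_subsets)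
  also have "\<dots> \<le> (\<Sum>i\<in>{..<ss}. (m - n) choose (ss - 1))"
  proof (rule sum_mono)
    fix i assume "i \<in> {..<ss}"
    then have "i \<le> ss - 1" by auto
    moreover have "2*(ss - 1) \<le> m - n" using bigs by arith
    ultimately show "(m - n) choose i \<le> (m - n) choose (ss - 1)" by (rule binomial_mono)
  qed
  also have "\<dots> = ss * ((m - n) choose (ss - 1))" by simp
  finally have cW: "card W \<le> ss * ((m - n) choose (ss - 1))" .
  have "card {A\<in>F. A \<inter> YY \<noteq> {} \<and> card (A \<inter> YY) < ss} \<le> card ((\<lambda>(P,B). P \<union> B) ` (Pow N1 \<times> W))"
    using sub finW by (intro card_mono finite_imageI finite_cartesian_product) auto
  also have "\<dots> \<le> card (Pow N1 \<times> W)" by (rule card_image_le) (use finW in auto)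
  also have "\<dots> = 2^n * card W" by (simp add: card_cartesian_product card_Pow)
  also have "\<dots> \<le> 2^n * (ss * ((m - n) choose (ss - 1)))" using cW by simp
  finally show ?thesis .
qed

lemma card_top: "card {A\<in>F. card (A \<inter> YY) = ss} \<le> card TH * ((m-n) choose ss) + 2^n * (ss * ((m-n-1) choose (ss-1)))"
proof -
  define K where "K = ksubsets N1 (n-k+1)"
  define D where "D = ss * ((m-n-1) choose (ss-1))"
  have finK: "finite K" unfolding K_def by (rule finite_ksub[OF k0 kn nk nm]) simp
  have sub: "{A\<in>F. card (A \<inter> YY) = ss} \<subseteq> (\<Union>S\<in>K. fib S)"
  proof
    fix A assume "A \<in> {A\<in>F. card (A \<inter> YY) = ss}"
    then have A: "A \<in> F" "card (A \<inter> YY) = ss" by auto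
    have "card (A \<inter> N1) = n - k + 1" using F_split[OF A(1)] A(2) sfacts by linarith
    then have "A \<inter> N1 \<in> K" by (auto simp: K_def ksubsets_def)
    moreover have "A \<in> fib (A \<inter> N1)" using A by (auto simp: fib_def)
    ultimately show "A \<in> (\<Union>S\<in>K. fib S)" by blast
  qed
  have "card {A\<in>F. card (A \<inter> YY) = ss} \<le> card (\<Union>S\<in>K. fib S)"
    using sub finK finF by (intro card_mono) (auto simp: fib_def)
  also have "\<dots> \<le> (\<Sum>S\<in>K. card (fib S))" by (rule card_UN_le[OF finK])
  also have "\<dots> = (\<Sum>S\<in>K - TH. card (fib S)) + (\<Sum>S\<in>TH. card (fib S))"
    using TH_sub finK unfolding K_def by (intro sum.subset_diff) auto
  also have "(\<Sum>S\<in>TH. card (fib S)) \<le> card TH * ((m-n) choose ss)"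
    using sum_bounded_above[of TH "\<lambda>S. card (fib S)" "(m-n) choose ss"] fib_le by (simp add: mult.commute)
  also have "(\<Sum>S\<in>K - TH. card (fib S)) \<le> card (K - TH) * D"
    using sum_bounded_above[of "K - TH" "\<lambda>S. card (fib S)" D]
    by (auto simp: K_def TH_def D_def not_less mult.commute)
  also have "card (K - TH) * D \<le> 2^n * D"
  proof -
    have "card (K - TH) \<le> card K" using finK by (intro card_mono) auto
    also have "card K = n choose (n-k+1)" by (simp add: K_def ksubsets_def n_subsets)
    also have "\<dots> \<le> 2^n" by (rule binomial_le_pow2)
    finally show ?thesis by simp
  qed
  finally show ?thesis unfolding D_def by simp
qed

lemma F_cover: "F \<subseteq> {A\<in>F. A \<inter> YY = {}} \<union> {A\<in>F. A \<inter> YY \<noteq> {} \<and> card (A \<inter> YY) < ss} \<union> {A\<in>F. card (A \<inter> YY) = ss}"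
  using F_lev by fastforce

lemma card_zero: "card {A\<in>F. A \<inter> YY = {}} \<le> n choose k"
proof -
  have "{A\<in>F. A \<inter> YY = {}} \<subseteq> ksubsets N1 k"
  proof
    fix A assume "A \<in> {A\<in>F. A \<inter> YY = {}}"
    then show "A \<in> ksubsets N1 k" using F_split[of A] by (auto simp: ksubsets_def)
  qed
  then have "card {A\<in>F. A \<inter> YY = {}} \<le> card (ksubsets N1 k)"
    by (intro card_mono finite_ksub[OF k0 kn nk nm]) auto
  then show ?thesis by (simp add: ksubsets_def n_subsets)
qed

lemma h_lower: "(n choose k) + ((n-1) choose (n-k)) * ((m-n) choose ss) \<le> h m n k"
proof -
  have "((n-1) choose (n-k)) * ((m-n) choose ss) = (\<lambda>i. ((n-1) choose (k-i-1)) * ((m-n) choose i)) ss"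
    using sfacts by simp
  also have "\<dots> \<le> (\<Sum>i=1..2*k-n-1. ((n-1) choose (k-i-1)) * ((m-n) choose i))"
    using sfacts by (intro member_le_sum) auto
  finally show ?thesis unfolding h_def by simp
qed

lemma small_case:
  assumes "card TH < (n-1) choose (n-k)"
  shows "card F < h m n k"
proof -
  define N where "N = m - n"
  define q where "q = ss - 1"
  have hq: "ss = Suc q" using sfacts unfolding q_def by arith
  define Ns where "Ns = N choose Suc q"
  define c where "c = N choose q"
  define b where "b = (N - 1) choose q"
  define P where "P = (2::nat)^n"
  define E where "E = (n-1) choose (n-k)"
  have Ns': "(m-n) choose ss = Ns" unfolding Ns_def N_def by (simp only: hq)
  have c': "(m-n) choose (ss-1) = c" unfolding c_def N_def by (simp only: hq) simp
  have b': "(m-n-1) choose (ss-1) = b" unfolding b_def N_def by (simp only: hq) simp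
  have e1: "Suc q * Ns = N * b"
    using binomial_absorption[of q N] unfolding Ns_def b_def by simp
  have e2: "(N - q) * c = N * b"
    using binomial_absorb_comp[of N q] unfolding c_def b_def by simp
  have bc: "b \<le> c" unfolding b_def c_def by (rule binomial_right_mono) simp
  have c0: "0 < c" unfolding c_def using bigs hq unfolding N_def by simp
  define X where "X = 2*P*Suc q*Suc q"
  have big': "X + Suc q \<le> N" using big unfolding X_def P_def N_def by (simp only: hq)
  then have bigN: "X < N - q" by linarith
  have "X * c < (N - q) * c" using bigN c0 by simp
  moreover have "X * c = Suc q * (2*P*Suc q*c)" unfolding X_def by (simp add: ac_simps)
  ultimately have "Suc q * (2*P*Suc q*c) < Suc q * Ns" using e1 e2 by simp
  then have key: "2*P*Suc q*c < Ns" using Suc_mult_less_cancel1 by blast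
  have bnd: "card F \<le> (n choose k) + P * (Suc q * c) + (card TH * Ns + P * (Suc q * b))"
  proof -
    have "card F \<le> card ({A\<in>F. A \<inter> YY = {}} \<union> {A\<in>F. A \<inter> YY \<noteq> {} \<and> card (A \<inter> YY) < ss} \<union> {A\<in>F. card (A \<inter> YY) = ss})"
      using F_cover finF by (intro card_mono) auto
    also have "\<dots> \<le> card {A\<in>F. A \<inter> YY = {}} + card {A\<in>F. A \<inter> YY \<noteq> {} \<and> card (A \<inter> YY) < ss} + card {A\<in>F. card (A \<inter> YY) = ss}"
      by (meson card_Un_le add_le_mono le_refl order_trans)
    finally have "card F \<le> (n choose k) + 2^n * (ss * ((m-n) choose (ss-1))) + (card TH * ((m-n) choose ss) + 2^n * (ss * ((m-n-1) choose (ss-1))))"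
      using card_zero card_low card_top by linarith
    then show ?thesis unfolding Ns' c' b' P_def by (simp only: hq)
  qed
  have "P * (Suc q * b) \<le> P * (Suc q * c)" using bc by (intro mult_le_mono2) simp
  moreover have "P * (Suc q * c) + P * (Suc q * c) = 2*P*Suc q*c" by (simp add: algebra_simps)
  moreover have "card TH + 1 \<le> E" using assms unfolding E_def by simp
  then have "(card TH + 1) * Ns \<le> E * Ns" by (rule mult_right_mono) simp
  moreover have "(n choose k) + E * Ns \<le> h m n k" using h_lower unfolding E_def Ns' .
  ultimately show ?thesis using bnd key by (simp add: algebra_simps)
qed

lemma upper:
  "card F \<le> h m n k \<and> (card F = h m n k \<longrightarrow> (\<exists>t\<in>{1..n}. F = H m n k t))"
proof -
  have nN: "card N1 = n" by simp
  have r1: "1 \<le> n - k + 1" by simp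
  have nr: "2*(n-k+1) \<le> n" "2*(n-k+1)+1 \<le> n" using sfacts by auto
  have le: "card TH \<le> (n - 1) choose (n - k + 1 - 1)"
    using katona(1)[OF _ nN[symmetric] r1 nr(1) TH_sub TH_int] by simp
  show ?thesis
  proof (cases "card TH = (n - 1) choose (n - k + 1 - 1)")
    case True
    obtain t where t: "t \<in> N1" "TH = {S \<in> ksubsets N1 (n-k+1). t \<in> S}"
      using ekr_unique[OF _ nN[symmetric] r1 nr(2) TH_sub TH_int True] by auto
    have sub: "F \<subseteq> H m n k t" using star_case[OF t] .
    have cH: "card (H m n k t) = h m n k" using card_H[OF k0 kn nk nm t(1)] .
    have finH: "finite (H m n k t)"
    proof -
      have "H m n k t \<subseteq> ksubsets {1..m} k" using H_mnk[OF k0 kn nk nm t(1)]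
        by (simp add: mnk_intersecting_def)
      then show ?thesis using finite_ksub[OF k0 kn nk nm] by (meson finite_atLeastAtMost finite_subset)
    qed
    have "card F \<le> h m n k" using card_mono[OF finH sub] cH by simp
    moreover have "card F = h m n k \<longrightarrow> F = H m n k t"
      using card_subset_eq[OF finH sub] cH by simp
    ultimately show ?thesis using t(1) by blast
  next
    case False
    then have "card TH < (n-1) choose (n-k)" using le by simp
    then show ?thesis using small_case by simp
  qed
qed

end
end

theorem theorem14:
  fixes n k :: nat
  assumes "0 < k" and "k \<le> n" and "n + 3 < 2 * k"
  shows "\<exists>M. \<forall>m\<ge>M. alpha m n k = h m n k \<and>
           (\<forall>F. mnk_intersecting m n k F \<and> card F = alpha m n k \<longrightarrow>
                (\<exists>t\<in>{1..n}. F = H m n k t))"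
proof -
  let ?s = "2*k-n-1"
  show ?thesis
  proof (intro exI allI impI)
    fix m assume m: "n + 2*2^n*?s*?s + ?s + 1 \<le> m"
    have nm: "n < m" using m by simp
    have big: "2*2^n*?s*?s + ?s \<le> m - n" using m by simp
    note up = upper[OF assms nm big]
    let ?Fam = "{F. mnk_intersecting m n k F}"
    have finFam: "finite ?Fam"
    proof -
      have "?Fam \<subseteq> Pow (ksubsets {1..m} k)" by (auto simp: mnk_intersecting_def)
      moreover have "finite (ksubsets {1..m} k)" using finite_ksub[OF assms nm] by simp
      ultimately show ?thesis by (meson finite_Pow_iff finite_subset)
    qed
    have t1: "1 \<in> {1..n}" using assms by simp
    have Hin: "H m n k 1 \<in> ?Fam" using H_mnk[OF assms nm t1] by simp
    have al: "alpha m n k = h m n k"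
      unfolding alpha_def
    proof (rule Max_eqI)
      show "finite (card ` ?Fam)" using finFam by simp
      show "y \<le> h m n k" if "y \<in> card ` ?Fam" for y using that up by auto
      show "h m n k \<in> card ` ?Fam" using Hin card_H[OF assms nm t1] by (metis image_eqI)
    qed
    show "alpha m n k = h m n k \<and>
           (\<forall>F. mnk_intersecting m n k F \<and> card F = alpha m n k \<longrightarrow>
                (\<exists>t\<in>{1..n}. F = H m n k t))"
      using al up by auto
  qed
qed

end
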